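(* Let $f:\mathbb{R}^{n\times n}\to\mathbb{R}$ be differentiable with $\|\nabla f(X)-\nabla f(Y)\|_{\mathsf F}\le L\|X-Y\|_{\mathsf F}$ for all $X,Y\in\mathcal{D}_{[0,1]^n}$. Let $0<p<1$, $\epsilon\ge0$, $\sigma>0$, and let $\bar X\in\mathcal{D}_n$ be a KKT point of \[ \min_{X\in\mathcal{D}_n}\ f(X)+\sigma\sum_{i,j=1}^n (X_{ij}+\epsilon)^p, \] i.e. there exist $S\in\mathbb{R}^{n\times n}$ and $\lambda,\mu\in\mathbb{R}^n$ such that for all $i,j\in\{1,\dots,n\}$: $\bar X_{ij}S_{ij}=0$, $S_{ij}\ge0$, and $(W_{ij}-\lambda_i-\mu_j)(\bar X_{ij}+\epsilon)+\sigma p(\bar X_{ij}+\epsilon)^p=\epsilon S_{ij}$, where $W=\nabla f(\bar X)$. Define \[ \bar c=\Big(\|\bar X\|_0^{1-p}(n+\|\bar X\|_0\epsilon)^p-(n-1)(1+\epsilon)^{p-1}+\sqrt{2n}\,\frac{L\sqrt n+\|\nabla f(\mathbf 0)\|_{\mathsf F}}{\sigma p}\Big)^{\frac{1}{p-1}} . \] Then every $(i,j)$ with $\bar X_{ij}>0$ satisfies $\bar X_{ij}\ge\max(\bar c-\epsilon,0)$.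
   Context: $\mathcal{D}_n=\{X\in\mathbb{R}^{n\times n}: X\mathbf{e}=X^{\mathsf T}\mathbf{e}=\mathbf{e},\ X\ge0\}$ ($\mathbf{e}$ the all-ones vector), $\mathcal{D}_{[0,1]^n}=\{X\in\mathbb{R}^{n\times n}:0\le X_{ij}\le1\}$, $\|X\|_0$ is the number of nonzero entries of $X$, $\mathbf 0$ is the zero matrix, $\|\cdot\|_{\mathsf F}$ the Frobenius norm. *)

theory Defs
  imports "HOL-Analysis.Analysis"
begin

text \<open>n x n real matrices are represented as real^'n^'n; the Euclidean norm on this
type is the Frobenius norm and the inner product is the Frobenius inner product.\<close>

definition doubly_stochastic :: "real^'n^'n \<Rightarrow> bool" where
  "doubly_stochastic X \<longleftrightarrow>
     (\<forall>i. (\<Sum>j\<in>UNIV. X$i$j) = 1) \<and> (\<forall>j. (\<Sum>i\<in>UNIV. X$i$j) = 1) \<and> (\<forall>i j. X$i$j \<ge> 0)"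

definition unit_box_mat :: "(real^'n^'n) set" where
  "unit_box_mat = {X. \<forall>i j. 0 \<le> X$i$j \<and> X$i$j \<le> 1}"

definition l0norm :: "real^'n^'n \<Rightarrow> nat" where
  "l0norm X = card {(i,j). X$i$j \<noteq> 0}"

end

theory Submission
  imports Defs
begin


lemma hall:
  fixes S :: "'a \<Rightarrow> 'b::finite set"
  assumes "finite I" "\<forall>J\<subseteq>I. card J \<le> card (\<Union>(S ` J))"
  shows "\<exists>f. inj_on f I \<and> (\<forall>i\<in>I. f i \<in> S i)"
  using assms
proof (induct I arbitrary: S rule: finite_psubset_induct)
  case (psubset I)
  note IH = psubset.hyps(2)
  show ?case
  proof (cases "I = {}")
    case True then show ?thesis by auto
  next
    case Ine: False
    show ?thesis
    proof (cases "\<forall>J. J \<subseteq> I \<and> J \<noteq> {} \<and> J \<noteq> I \<longrightarrow> card J < card (\<Union>(S ` J))")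
      case True
      obtain i0 where i0: "i0 \<in> I" using Ine by auto
      have "card {i0} \<le> card (S i0)" using psubset.prems[rule_format, of "{i0}"] i0 by auto
      then obtain x where x: "x \<in> S i0" by fastforce
      define S' where "S' = (\<lambda>k. S k - {x})"
      have "\<forall>J\<subseteq>I - {i0}. card J \<le> card (\<Union>(S' ` J))"
      proof (intro allI impI)
        fix J assume J: "J \<subseteq> I - {i0}"
        show "card J \<le> card (\<Union>(S' ` J))"
        proof (cases "J = {}")
          case True then show ?thesis by simp
        next
          case False
          have "J \<noteq> I" using J i0 by auto
          with J False True have lt: "card J < card (\<Union>(S ` J))" by auto
          have "\<Union>(S ` J) \<subseteq> insert x (\<Union>(S' ` J))" unfolding S'_def by auto
          then have "card (\<Union>(S ` J)) \<le> card (insert x (\<Union>(S' ` J)))"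
            by (intro card_mono) auto
          also have "\<dots> \<le> card (\<Union>(S' ` J)) + 1" by (simp add: card_insert_if)
          finally show ?thesis using lt by linarith
        qed
      qed
      moreover have "I - {i0} \<subset> I" using i0 by auto
      ultimately obtain f' where f': "inj_on f' (I - {i0})" "\<forall>k\<in>I - {i0}. f' k \<in> S' k"
        using IH by meson
      define f where "f = f'(i0 := x)"
      have "inj_on f (insert i0 (I - {i0}))"
      proof (rule inj_on_insert[THEN iffD2], intro conjI)
        show "inj_on f (I - {i0})" using f'(1) unfolding f_def inj_on_def by auto
        show "f i0 \<notin> f ` (I - {i0} - {i0})" using f'(2) unfolding f_def S'_def by auto
      qed
      then have "inj_on f I" using i0 by (simp add: insert_absorb)
      moreover have "\<forall>i\<in>I. f i \<in> S i" using f' x unfolding f_def S'_def by auto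
      ultimately show ?thesis by blast
    next
      case False
      then obtain J where J: "J \<subseteq> I" "J \<noteq> {}" "J \<noteq> I" "card (\<Union>(S ` J)) \<le> card J"
        by (auto simp: not_less)
      have "J \<subset> I" using J by auto
      moreover have "\<forall>K\<subseteq>J. card K \<le> card (\<Union>(S ` K))" using psubset.prems J(1) by auto
      ultimately obtain f1 where f1: "inj_on f1 J" "\<forall>k\<in>J. f1 k \<in> S k" using IH by meson
      define U where "U = \<Union>(S ` J)"
      define S2 where "S2 = (\<lambda>k. S k - U)"
      have fin: "finite I" by fact
      have "\<forall>K\<subseteq>I - J. card K \<le> card (\<Union>(S2 ` K))"
      proof (intro allI impI)
        fix K assume K: "K \<subseteq> I - J"
        have "K \<union> J \<subseteq> I" using K J(1) by auto
        then have "card (K \<union> J) \<le> card (\<Union>(S ` (K \<union> J)))" using psubset.prems by blast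
        moreover have "card (K \<union> J) = card K + card J"
          using K fin J(1) by (intro card_Un_disjoint) (auto intro: finite_subset)
        moreover have eqU: "\<Union>(S ` (K \<union> J)) = \<Union>(S2 ` K) \<union> U" unfolding S2_def U_def by auto
        moreover have "card (\<Union>(S ` (K \<union> J))) \<le> card (\<Union>(S2 ` K)) + card U"
          unfolding eqU by (rule card_Un_le)
        ultimately show "card K \<le> card (\<Union>(S2 ` K))" using J(4) unfolding U_def by linarith
      qed
      moreover have "I - J \<subset> I" using J by auto
      ultimately obtain f2 where f2: "inj_on f2 (I - J)" "\<forall>k\<in>I - J. f2 k \<in> S2 k" using IH by meson
      define f where "f = (\<lambda>k. if k \<in> J then f1 k else f2 k)"
      have "inj_on f I"
        unfolding inj_on_def f_def
      proof (intro ballI impI)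
        fix a b assume ab: "a \<in> I" "b \<in> I" "(if a \<in> J then f1 a else f2 a) = (if b \<in> J then f1 b else f2 b)"
        show "a = b"
        proof (cases "a \<in> J"; cases "b \<in> J")
          assume "a \<in> J" "b \<in> J" then show ?thesis using ab f1(1) by (auto simp: inj_on_def)
        next
          assume "a \<notin> J" "b \<notin> J" then show ?thesis using ab f2(1) by (auto simp: inj_on_def)
        next
          assume "a \<in> J" "b \<notin> J"
          then have "f1 a \<in> U" "f2 b \<notin> U" using f1 f2 ab unfolding U_def S2_def by auto
          then show ?thesis using ab \<open>a \<in> J\<close> \<open>b \<notin> J\<close> by auto
        next
          assume "a \<notin> J" "b \<in> J"
          then have "f1 b \<in> U" using f1 unfolding U_def by auto
          moreover have "f2 a \<notin> U" using f2 ab(1) \<open>a \<notin> J\<close> unfolding S2_def by auto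
          ultimately have "f1 b \<in> U" "f2 a \<notin> U" by auto
          then show ?thesis using ab \<open>a \<notin> J\<close> \<open>b \<in> J\<close> by auto
        qed
      qed
      moreover have "\<forall>i\<in>I. f i \<in> S i" using f1 f2 unfolding f_def S2_def by auto
      ultimately show ?thesis by blast
    qed
  qed
qed

lemma sum_powr_concave:
  fixes y :: "'a \<Rightarrow> real"
  assumes T: "finite T" "T \<noteq> {}" and y: "\<forall>z\<in>T. y z > 0" and p: "0<p" "p<1"
  shows "(\<Sum>z\<in>T. y z powr p) \<le> real (card T) powr (1-p) * (\<Sum>z\<in>T. y z) powr p"
proof -
  define m where "m = real (card T)"
  define s where "s = (\<Sum>z\<in>T. y z)"
  have m: "m > 0" using T m_def by (simp add: card_gt_0_iff)
  have s: "s > 0" unfolding s_def using T y by (intro sum_pos) auto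
  define a where "a = s / m"
  have a: "a > 0" using m s a_def by simp
  have each: "y z powr p * a powr (1-p) \<le> p * y z + (1-p) * a" if "z \<in> T" for z
    using Youngs_inequality_0[of p "1-p" "y z" a] p a y that by auto
  have "(\<Sum>z\<in>T. y z powr p) * a powr (1-p) = (\<Sum>z\<in>T. y z powr p * a powr (1-p))"
    by (simp add: sum_distrib_right)
  also have "\<dots> \<le> (\<Sum>z\<in>T. p * y z + (1-p) * a)" by (intro sum_mono each)
  also have "\<dots> = p * s + (1-p) * a * m" by (simp add: sum.distrib sum_distrib_left[symmetric] s_def m_def)
  also have "\<dots> = s" using m unfolding a_def by (simp add: field_simps)
  finally have 1: "(\<Sum>z\<in>T. y z powr p) \<le> s / a powr (1-p)"
    using a by (simp add: pos_le_divide_eq)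
  have "s / a powr (1-p) = m powr (1-p) * s powr p"
    unfolding a_def using m s
    by (simp add: powr_divide powr_diff field_simps)
  then show ?thesis using 1 unfolding m_def s_def by simp
qed


lemma perm_support:
  fixes X :: "real^'n^'n"
  assumes ds: "doubly_stochastic X" and pos: "X$i$j > 0"
  shows "\<exists>\<pi>. inj \<pi> \<and> \<pi> i = j \<and> (\<forall>k. X$k$(\<pi> k) > 0)"
proof -
  have rs: "\<And>r. (\<Sum>c\<in>UNIV. X$r$c) = 1" and cs: "\<And>c. (\<Sum>r\<in>UNIV. X$r$c) = 1"
    and nn: "\<And>r c. X$r$c \<ge> 0" using ds unfolding doubly_stochastic_def by auto
  define S where "S = (\<lambda>k. {c. c \<noteq> j \<and> X$k$c > 0})"
  have "\<forall>A\<subseteq>UNIV - {i}. card A \<le> card (\<Union>(S ` A))"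
  proof (intro allI impI)
    fix A assume A: "A \<subseteq> UNIV - {i}"
    define N where "N = {c. \<exists>r\<in>A. X$r$c > 0}"
    have US: "\<Union>(S ` A) = N - {j}" unfolding S_def N_def by auto
    have "real (card A) = (\<Sum>r\<in>A. 1)" by simp
    also have "\<dots> = (\<Sum>r\<in>A. \<Sum>c\<in>UNIV. X$r$c)" using rs by (intro sum.cong) auto
    also have "\<dots> = (\<Sum>r\<in>A. \<Sum>c\<in>N. X$r$c)"
    proof (rule sum.cong[OF refl])
      fix r assume r: "r \<in> A"
      have Z: "\<forall>c\<in>UNIV - N. X$r$c = 0"
      proof
        fix c assume "c \<in> UNIV - N"
        then have "\<not> X$r$c > 0" using r unfolding N_def by auto
        then show "X$r$c = 0" using nn[of r c] by linarith
      qed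
      show "(\<Sum>c\<in>UNIV. X$r$c) = (\<Sum>c\<in>N. X$r$c)"
        using sum.mono_neutral_right[of UNIV N "\<lambda>c. X$r$c"] Z by simp
    qed
    also have "\<dots> = (\<Sum>c\<in>N. \<Sum>r\<in>A. X$r$c)" by (rule sum.swap)
    finally have cA: "real (card A) = (\<Sum>c\<in>N. \<Sum>r\<in>A. X$r$c)" .
    have "(\<Sum>c\<in>N. \<Sum>r\<in>A. X$r$c) + (\<Sum>c\<in>N. X$i$c) = (\<Sum>c\<in>N. \<Sum>r\<in>insert i A. X$r$c)"
    proof -
      have iA: "i \<notin> A" using A by auto
      then show ?thesis by (simp add: sum.distrib)
    qed
    also have "\<dots> \<le> (\<Sum>c\<in>N. \<Sum>r\<in>UNIV. X$r$c)"
      by (intro sum_mono sum_mono2) (auto simp: nn)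
    also have "\<dots> = real (card N)" using cs by simp
    finally have key: "real (card A) + (\<Sum>c\<in>N. X$i$c) \<le> real (card N)" using cA by simp
    show "card A \<le> card (\<Union>(S ` A))"
    proof (cases "j \<in> N")
      case True
      have "X$i$j \<le> (\<Sum>c\<in>N. X$i$c)" using True nn by (intro member_le_sum) auto
      then have "card A < card N" using key pos by linarith
      moreover have "card (N - {j}) = card N - 1" using True by simp
      ultimately show ?thesis using US by simp
    next
      case False
      have "0 \<le> (\<Sum>c\<in>N. X$i$c)" using nn by (intro sum_nonneg) auto
      then have "card A \<le> card N" using key by linarith
      then show ?thesis using US False by simp
    qed
  qed
  then obtain g where g: "inj_on g (UNIV - {i})" "\<forall>k\<in>UNIV - {i}. g k \<in> S k"
    using hall[of "UNIV - {i}" S] by auto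
  define \<pi> where "\<pi> = g(i := j)"
  have "inj_on \<pi> (insert i (UNIV - {i}))"
  proof (rule inj_on_insert[THEN iffD2], intro conjI)
    show "inj_on \<pi> (UNIV - {i})" using g(1) unfolding \<pi>_def inj_on_def by auto
    show "\<pi> i \<notin> \<pi> ` (UNIV - {i} - {i})" using g(2) unfolding \<pi>_def S_def by auto
  qed
  then have "inj \<pi>" by (simp add: insert_absorb)
  moreover have "\<forall>k. X$k$(\<pi> k) > 0" using g(2) pos unfolding \<pi>_def S_def by auto
  ultimately show ?thesis unfolding \<pi>_def by auto
qed

theorem theorem3p4:
  fixes f :: "real^'n^'n \<Rightarrow> real"
    and grad :: "real^'n^'n \<Rightarrow> real^'n^'n"
    and L p \<epsilon> \<sigma> :: real
    and Xb :: "real^'n^'n"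
  assumes deriv: "\<And>X. (f has_derivative (\<lambda>H. grad X \<bullet> H)) (at X)"
    and lip: "\<And>X Y. X \<in> unit_box_mat \<Longrightarrow> Y \<in> unit_box_mat \<Longrightarrow>
                norm (grad X - grad Y) \<le> L * norm (X - Y)"
    and p: "0 < p" "p < 1"
    and eps: "\<epsilon> \<ge> 0"
    and sigma: "\<sigma> > 0"
    and ds: "doubly_stochastic Xb"
    and kkt: "\<exists>(S::real^'n^'n) (lam::real^'n) (\<mu>::real^'n). \<forall>i j.
               Xb$i$j * S$i$j = 0 \<and> S$i$j \<ge> 0 \<and>
               (grad Xb $i$j - lam$i - \<mu>$j) * (Xb$i$j + \<epsilon>) + \<sigma> * p * (Xb$i$j + \<epsilon>) powr p
                 = \<epsilon> * S$i$j"
  shows "\<forall>i j. Xb$i$j > 0 \<longrightarrow>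
           Xb$i$j \<ge> max
             ((real (l0norm Xb) powr (1 - p) * (real CARD('n) + real (l0norm Xb) * \<epsilon>) powr p
               - (real CARD('n) - 1) * (1 + \<epsilon>) powr (p - 1)
               + sqrt (2 * real CARD('n)) * (L * sqrt (real CARD('n)) + norm (grad 0)) / (\<sigma> * p))
              powr (1 / (p - 1)) - \<epsilon>) 0"
proof (intro allI impI)
  fix i j assume xpos: "Xb$i$j > 0"
  obtain Sm lam mu where K: "\<forall>i j. Xb$i$j * Sm$i$j = 0 \<and> Sm$i$j \<ge> 0 \<and>
      (grad Xb $i$j - lam$i - mu$j) * (Xb$i$j + \<epsilon>) + \<sigma> * p * (Xb$i$j + \<epsilon>) powr p = \<epsilon> * Sm$i$j"
    using kkt by blast
  define W where "W = grad Xb"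
  define n where "n = real CARD('n)"
  have rs: "\<And>r. (\<Sum>c\<in>UNIV. Xb$r$c) = 1" and cs: "\<And>c. (\<Sum>r\<in>UNIV. Xb$r$c) = 1"
    and nn: "\<And>r c. Xb$r$c \<ge> 0" using ds unfolding doubly_stochastic_def by auto
  have le1: "Xb$r$c \<le> 1" for r c
  proof -
    have "Xb$r$c \<le> (\<Sum>c'\<in>UNIV. Xb$r$c')" using nn by (intro member_le_sum) auto
    then show ?thesis using rs by simp
  qed
  have n1: "n \<ge> 1" unfolding n_def using finite_UNIV_card_ge_0[where 'a='n] by simp
  have sigp: "\<sigma> * p > 0" using sigma p by simp
  define D where "D = (\<lambda>k l. lam$k + mu$l - W$k$l)"
  have Dsupp: "D k l = \<sigma> * p * (Xb$k$l + \<epsilon>) powr (p - 1)" if kl: "Xb$k$l > 0" for k l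
  proof -
    define y where "y = Xb$k$l + \<epsilon>"
    have y: "y > 0" using kl eps y_def by simp
    have "Sm$k$l = 0" using K kl by (metis mult_eq_0_iff order_less_irrefl)
    then have "(W$k$l - lam$k - mu$l) * y + \<sigma> * p * y powr p = 0"
      using K unfolding W_def y_def by (metis mult_zero_right)
    then have "D k l * y = \<sigma> * p * y powr p" unfolding D_def by (simp add: algebra_simps)
    then have "D k l = \<sigma> * p * y powr p / y" using y by (simp add: field_simps)
    also have "\<dots> = \<sigma> * p * y powr (p - 1)" using y by (simp add: powr_diff)
    finally show ?thesis unfolding y_def .
  qed
  obtain \<pi> where \<pi>: "inj \<pi>" "\<pi> i = j" "\<And>k. Xb$k$(\<pi> k) > 0"
    using perm_support[OF ds xpos] by blast
  have bij\<pi>: "bij \<pi>" using \<pi>(1) by (simp add: bij_def finite_UNIV_inj_surj)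
  define P :: "real^'n^'n" where "P = (\<chi> k l. if l = \<pi> k then 1 else 0)"
  have inner: "\<And>A B::real^'n^'n. A \<bullet> B = (\<Sum>k\<in>UNIV. \<Sum>l\<in>UNIV. A$k$l * B$k$l)"
    by (simp add: inner_vec_def)
  have WP: "W \<bullet> P = (\<Sum>k\<in>UNIV. W$k$(\<pi> k))"
  proof -
    have "(\<Sum>l\<in>UNIV. W$k$l * P$k$l) = W$k$(\<pi> k)" for k
    proof -
      have "(\<Sum>l\<in>UNIV. W$k$l * P$k$l) = (\<Sum>l\<in>UNIV. if l = \<pi> k then W$k$l else 0)"
        unfolding P_def by (rule sum.cong) auto
      also have "\<dots> = W$k$(\<pi> k)" by simp
      finally show ?thesis .
    qed
    then show ?thesis unfolding inner by simp
  qed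
  have muperm: "(\<Sum>k\<in>UNIV. mu$(\<pi> k)) = (\<Sum>k\<in>UNIV. mu$k)"
    using sum.reindex_bij_betw[OF bij\<pi>[unfolded bij_def, THEN conjunct1, THEN inj_on_imp_bij_betw], of "\<lambda>k. mu$k"]
      bij\<pi> by (simp add: bij_def)
  have E1: "(\<Sum>k\<in>UNIV. D k (\<pi> k)) = (\<Sum>k\<in>UNIV. lam$k) + (\<Sum>k\<in>UNIV. mu$k) - W \<bullet> P"
    unfolding D_def WP muperm[symmetric] by (simp add: sum.distrib sum_subtractf)
  have E2: "(\<Sum>k\<in>UNIV. \<Sum>l\<in>UNIV. Xb$k$l * D k l) = (\<Sum>k\<in>UNIV. lam$k) + (\<Sum>k\<in>UNIV. mu$k) - W \<bullet> Xb"
  proof -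
    have "(\<Sum>k\<in>UNIV. \<Sum>l\<in>UNIV. Xb$k$l * D k l)
        = (\<Sum>k\<in>UNIV. \<Sum>l\<in>UNIV. lam$k * Xb$k$l + mu$l * Xb$k$l - W$k$l * Xb$k$l)"
      unfolding D_def by (intro sum.cong) (auto simp: algebra_simps)
    also have "\<dots> = (\<Sum>k\<in>UNIV. lam$k * (\<Sum>l\<in>UNIV. Xb$k$l)) + (\<Sum>k\<in>UNIV. \<Sum>l\<in>UNIV. mu$l * Xb$k$l)
         - (\<Sum>k\<in>UNIV. \<Sum>l\<in>UNIV. W$k$l * Xb$k$l)"
      by (simp add: sum.distrib sum_subtractf sum_distrib_left)
    also have "(\<Sum>k\<in>UNIV. \<Sum>l\<in>UNIV. mu$l * Xb$k$l) = (\<Sum>l\<in>UNIV. mu$l * (\<Sum>k\<in>UNIV. Xb$k$l))"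
      by (subst sum.swap) (simp add: sum_distrib_left)
    finally show ?thesis using rs cs unfolding inner by simp
  qed
  have Esum: "(\<Sum>k\<in>UNIV. D k (\<pi> k)) = (\<Sum>k\<in>UNIV. \<Sum>l\<in>UNIV. Xb$k$l * D k l) + W \<bullet> (Xb - P)"
    using E1 E2 by (simp add: inner_diff_right)
  define c1 where "c1 = (1 + \<epsilon>) powr (p - 1)"
  have E3: "D i j + (n - 1) * (\<sigma> * p * c1) \<le> (\<Sum>k\<in>UNIV. D k (\<pi> k))"
  proof -
    have "(\<Sum>k\<in>UNIV. D k (\<pi> k)) = D i (\<pi> i) + (\<Sum>k\<in>UNIV - {i}. D k (\<pi> k))"
      by (simp add: sum.remove)
    moreover have "(\<Sum>k\<in>UNIV - {i}. \<sigma> * p * c1) \<le> (\<Sum>k\<in>UNIV - {i}. D k (\<pi> k))"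
    proof (rule sum_mono)
      fix k
      have "c1 \<le> (Xb$k$(\<pi> k) + \<epsilon>) powr (p - 1)"
        unfolding c1_def using p \<pi>(3)[of k] le1[of k "\<pi> k"] eps by (intro powr_mono2') auto
      then have "\<sigma> * p * c1 \<le> \<sigma> * p * (Xb$k$(\<pi> k) + \<epsilon>) powr (p - 1)"
        using sigp by (intro mult_left_mono) auto
      then show "\<sigma> * p * c1 \<le> D k (\<pi> k)" using Dsupp[OF \<pi>(3)[of k]] by simp
    qed
    moreover have "(\<Sum>k\<in>UNIV - {i}. \<sigma> * p * c1) = (n - 1) * (\<sigma> * p * c1)"
      using n1 unfolding n_def by (simp add: card_Diff_singleton of_nat_diff)
    ultimately show ?thesis using \<pi>(2) unfolding n_def by simp
  qed
  define T where "T = {(k,l). Xb$k$l \<noteq> 0}"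
  have cardT: "card T = l0norm Xb" unfolding T_def l0norm_def ..
  have E4: "(\<Sum>k\<in>UNIV. \<Sum>l\<in>UNIV. Xb$k$l * D k l)
      \<le> \<sigma> * p * (real (card T) powr (1 - p) * (n + real (card T) * \<epsilon>) powr p)"
  proof -
    define g where "g = (\<lambda>z. if Xb$(fst z)$(snd z) \<noteq> 0 then \<sigma> * p * (Xb$(fst z)$(snd z) + \<epsilon>) powr p else 0)"
    have "(\<Sum>k\<in>UNIV. \<Sum>l\<in>UNIV. Xb$k$l * D k l) \<le> (\<Sum>k\<in>UNIV. \<Sum>l\<in>UNIV. g (k,l))"
    proof (intro sum_mono)
      fix k l
      show "Xb$k$l * D k l \<le> g (k,l)"
      proof (cases "Xb$k$l = 0")
        case True then show ?thesis unfolding g_def by simp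
      next
        case False
        then have xp: "Xb$k$l > 0" using nn[of k l] by linarith
        define y where "y = Xb$k$l + \<epsilon>"
        have y: "y > 0" "Xb$k$l \<le> y" using xp eps y_def by auto
        have yy: "y * y powr (p - 1) = y powr p"
          using powr_add[of y 1 "p - 1"] y by simp
        have "Xb$k$l * D k l = Xb$k$l * (\<sigma> * p * y powr (p - 1))" using Dsupp[OF xp] y_def by simp
        also have "\<dots> \<le> y * (\<sigma> * p * y powr (p - 1))"
          using y sigp by (intro mult_right_mono) auto
        also have "\<dots> = \<sigma> * p * y powr p" using yy by (simp add: algebra_simps)
        finally show ?thesis unfolding g_def y_def using False by simp
      qed
    qed
    also have "(\<Sum>k\<in>UNIV. \<Sum>l\<in>UNIV. g (k,l)) = (\<Sum>z\<in>UNIV. g z)"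
      by (simp add: sum.cartesian_product UNIV_Times_UNIV[symmetric] del: UNIV_Times_UNIV)
    also have "\<dots> = (\<Sum>z\<in>T. \<sigma> * p * (Xb$(fst z)$(snd z) + \<epsilon>) powr p)"
      unfolding g_def T_def by (intro sum.mono_neutral_cong_right) auto
    also have "\<dots> = \<sigma> * p * (\<Sum>z\<in>T. (Xb$(fst z)$(snd z) + \<epsilon>) powr p)"
      by (simp add: sum_distrib_left)
    also have "(\<Sum>z\<in>T. (Xb$(fst z)$(snd z) + \<epsilon>) powr p)
        \<le> real (card T) powr (1 - p) * (\<Sum>z\<in>T. Xb$(fst z)$(snd z) + \<epsilon>) powr p"
    proof (rule sum_powr_concave)
      show "finite T" by simp
      have "(i,j) \<in> T" using xpos unfolding T_def by auto
      then show "T \<noteq> {}" by auto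
      show "\<forall>z\<in>T. Xb$(fst z)$(snd z) + \<epsilon> > 0"
      proof
        fix z assume "z \<in> T"
        then have "Xb$(fst z)$(snd z) \<noteq> 0" unfolding T_def by auto
        then have "Xb$(fst z)$(snd z) > 0" using nn[of "fst z" "snd z"] by linarith
        then show "Xb$(fst z)$(snd z) + \<epsilon> > 0" using eps by linarith
      qed
    qed (use p in auto)
    also have "(\<Sum>z\<in>T. Xb$(fst z)$(snd z) + \<epsilon>) = n + real (card T) * \<epsilon>"
    proof -
      have "(\<Sum>z\<in>T. Xb$(fst z)$(snd z)) = (\<Sum>z\<in>UNIV. Xb$(fst z)$(snd z))"
        unfolding T_def by (intro sum.mono_neutral_left) auto
      also have "\<dots> = (\<Sum>k\<in>UNIV. \<Sum>l\<in>UNIV. Xb$k$l)"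
        by (simp add: sum.cartesian_product case_prod_unfold UNIV_Times_UNIV[symmetric] del: UNIV_Times_UNIV)
      also have "\<dots> = n" using rs unfolding n_def by simp
      finally show ?thesis by (simp add: sum.distrib)
    qed
    finally show ?thesis using sigp by (simp add: mult_left_mono)
  qed
  have box0: "0 \<in> unit_box_mat" unfolding unit_box_mat_def by simp
  have boxX: "Xb \<in> unit_box_mat" unfolding unit_box_mat_def using nn le1 by auto
  have L0: "L \<ge> 0"
  proof -
    define One :: "real^'n^'n" where "One = (\<chi> k l. 1)"
    have box1: "One \<in> unit_box_mat" unfolding unit_box_mat_def One_def by simp
    have "(0 - One)$i$j = -1" unfolding One_def by simp
    then have "0 - One \<noteq> 0" by (metis zero_index neg_equal_0_iff_equal zero_neq_one)
    then have "norm (0 - One) > 0" by simp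
    moreover have "0 \<le> L * norm (0 - One)"
      using lip[OF box0 box1] norm_ge_zero[of "grad 0 - grad One"] by linarith
    ultimately show ?thesis by (simp add: zero_le_mult_iff)
  qed
  have sqsum: "\<And>A::real^'n^'n. norm A = sqrt (\<Sum>k\<in>UNIV. \<Sum>l\<in>UNIV. (A$k$l)^2)"
    by (simp add: norm_eq_sqrt_inner inner power2_eq_square)
  have nX: "norm Xb \<le> sqrt n"
  proof -
    have "(\<Sum>k\<in>UNIV. \<Sum>l\<in>UNIV. (Xb$k$l)^2) \<le> (\<Sum>k\<in>UNIV. \<Sum>l\<in>UNIV. Xb$k$l)"
    proof (intro sum_mono)
      fix k l
      have "Xb$k$l * Xb$k$l \<le> Xb$k$l * 1" using nn le1 by (intro mult_left_mono) auto
      then show "(Xb$k$l)^2 \<le> Xb$k$l" by (simp add: power2_eq_square)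
    qed
    also have "\<dots> = n" using rs unfolding n_def by simp
    finally show ?thesis unfolding sqsum by simp
  qed
  have nXP: "norm (Xb - P) \<le> sqrt (2 * n)"
  proof -
    have "(\<Sum>k\<in>UNIV. \<Sum>l\<in>UNIV. ((Xb - P)$k$l)^2) \<le> (\<Sum>k\<in>UNIV. \<Sum>l\<in>UNIV. Xb$k$l + P$k$l)"
    proof (intro sum_mono)
      fix k l
      have x0: "0 \<le> Xb$k$l" and x1: "Xb$k$l \<le> 1" using nn le1 by auto
      show "((Xb - P)$k$l)^2 \<le> Xb$k$l + P$k$l"
      proof (cases "l = \<pi> k")
        case True
        have "(1 - Xb$k$l) * (1 - Xb$k$l) \<le> (1 - Xb$k$l) * 1" using x0 x1 by (intro mult_left_mono) auto
        then show ?thesis using True x0 unfolding P_def by (simp add: power2_eq_square algebra_simps)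
      next
        case False
        have "Xb$k$l * Xb$k$l \<le> Xb$k$l * 1" using x0 x1 by (intro mult_left_mono) auto
        then show ?thesis using False unfolding P_def by (simp add: power2_eq_square)
      qed
    qed
    also have "\<dots> = (\<Sum>k\<in>UNIV. \<Sum>l\<in>UNIV. Xb$k$l) + (\<Sum>k\<in>UNIV. \<Sum>l\<in>UNIV. P$k$l)"
      by (simp add: sum.distrib)
    also have "(\<Sum>k\<in>UNIV. \<Sum>l\<in>UNIV. P$k$l) = n" unfolding P_def n_def by simp
    also have "(\<Sum>k\<in>UNIV. \<Sum>l\<in>UNIV. Xb$k$l) = n" using rs unfolding n_def by simp
    finally show ?thesis unfolding sqsum by simp
  qed
  have nW: "norm W \<le> norm (grad 0) + L * sqrt n"
  proof -
    have "norm W \<le> norm (grad 0) + norm (W - grad 0)" by (rule norm_triangle_sub)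
    also have "norm (W - grad 0) \<le> L * norm (Xb - 0)" unfolding W_def by (rule lip[OF boxX box0])
    also have "L * norm (Xb - 0) \<le> L * sqrt n" using nX L0 by (simp add: mult_left_mono)
    finally show ?thesis by simp
  qed
  have E5: "W \<bullet> (Xb - P) \<le> sqrt (2 * n) * (L * sqrt n + norm (grad 0))"
  proof -
    have "W \<bullet> (Xb - P) \<le> norm W * norm (Xb - P)" by (rule norm_cauchy_schwarz)
    also have "\<dots> \<le> (norm (grad 0) + L * sqrt n) * sqrt (2 * n)"
      using nW nXP L0 n1 by (intro mult_mono) auto
    finally show ?thesis by (simp add: algebra_simps)
  qed
  define q where "q = (Xb$i$j + \<epsilon>) powr (p - 1)"
  define C where "C = sqrt (2 * n) * (L * sqrt n + norm (grad 0))"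
  define base where "base = real (card T) powr (1 - p) * (n + real (card T) * \<epsilon>) powr p
      - (n - 1) * c1 + C / (\<sigma> * p)"
  have Dij: "D i j = \<sigma> * p * q" using Dsupp[OF xpos] unfolding q_def .
  have "\<sigma> * p * q \<le> \<sigma> * p * (real (card T) powr (1 - p) * (n + real (card T) * \<epsilon>) powr p)
      - (n - 1) * (\<sigma> * p * c1) + C"
    using E3 E4 E5 Esum Dij unfolding C_def by linarith
  then have "\<sigma> * p * (q - (real (card T) powr (1 - p) * (n + real (card T) * \<epsilon>) powr p - (n - 1) * c1)) \<le> C"
    by (simp add: algebra_simps)
  then have "q - (real (card T) powr (1 - p) * (n + real (card T) * \<epsilon>) powr p - (n - 1) * c1) \<le> C / (\<sigma> * p)"
    using sigp by (simp add: pos_le_divide_eq mult.commute)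
  then have qb: "q \<le> base" unfolding base_def by simp
  have y: "Xb$i$j + \<epsilon> > 0" using xpos eps by simp
  have q0: "q > 0" unfolding q_def using y by simp
  have "base powr (1 / (p - 1)) \<le> q powr (1 / (p - 1))"
    using p q0 qb by (intro powr_mono2') (auto simp: divide_nonpos_pos)
  also have "q powr (1 / (p - 1)) = Xb$i$j + \<epsilon>"
    unfolding q_def using y p by (simp add: powr_powr)
  finally have fin: "base powr (1 / (p - 1)) - \<epsilon> \<le> Xb$i$j" by simp
  have "base = real (l0norm Xb) powr (1 - p) * (real CARD('n) + real (l0norm Xb) * \<epsilon>) powr p
               - (real CARD('n) - 1) * (1 + \<epsilon>) powr (p - 1)
               + sqrt (2 * real CARD('n)) * (L * sqrt (real CARD('n)) + norm (grad 0)) / (\<sigma> * p)"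
    unfolding base_def cardT C_def n_def c1_def ..
  then show "Xb$i$j \<ge> max
             ((real (l0norm Xb) powr (1 - p) * (real CARD('n) + real (l0norm Xb) * \<epsilon>) powr p
               - (real CARD('n) - 1) * (1 + \<epsilon>) powr (p - 1)
               + sqrt (2 * real CARD('n)) * (L * sqrt (real CARD('n)) + norm (grad 0)) / (\<sigma> * p))
              powr (1 / (p - 1)) - \<epsilon>) 0"
    using fin xpos by simp
qed

end
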